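(* Hourglass persistence is more expressive than FB-persistence: for every graph $G$ with filtration function $f$, the FB-persistence sequence of $(G,f)$ is one of the hourglass sequences of $(G,f)$; and there exist graphs $G,H$ with the degree filtration whose FB-persistence diagrams coincide in all degrees, but for which some hourglass schedule (a prescribed order, in terms of the indices of the intermediate complexes, of including and contracting them), applied to both, yields different persistence diagrams.
   Context: Graphs are finite, undirected, possibly with self-loops and multi-edges. A filtration function on $G=(V,E)$ is $f:V\cup E\to\mathbb{R}$ with $f(v),f(w)\le f(e)$ for each edge $e=(v,w)$; degree filtration: $f(v)=\deg v$, $f(e)=\max(f(v),f(w))$. With distinct values $a_0<\dots<a_n$, $G_{-1}=\emptyset$, $G_i=f^{-1}((-\infty,a_i])$, and the intermediate complex $\mathrm{IC}_i(G,f)$ is the subgraph formed by the vertices and edges of $G_i\setminus G_{i-1}$ together with endpoints of those edges. Persistence diagrams of a sequence of spaces and continuous maps are those of the interval decomposition of $H_k(-;\mathbb{Z}/2)$ applied to it (indexed by positions). FB-persistence: the sequence $G_0\subset\dots\subset G_n=G\to G/\mathrm{IC}_n\to\dots\to\text{point}$ which first includes and then contracts $\mathrm{IC}_n,\mathrm{IC}_{n-1},\dots,\mathrm{IC}_0$ in turn (each contraction collapses the piece together with the point to which previously contracted pieces were collapsed). An hourglass sequence is any sequence starting at $\emptyset$ in which each step either includes (adjoins) some $\mathrm{IC}_j$, or contracts (quotients, together with the previously contracted point) some $\mathrm{IC}_j$ that has already been included, every $\mathrm{IC}_j$ being included before it is contracted; hourglass persistence diagrams are the persistence diagrams of such sequences.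 *)

theory Defs
  imports Complex_Main "HOL-Library.Z2" "HOL-Library.Function_Algebras"
begin

text \<open>A finite graph with possible self-loops and multi-edges: a vertex set V, an edge set E
  and an endpoint map ends (each edge has an unordered pair of endpoints, a self-loop has
  equal endpoints).\<close>

definition wf_graph :: "'v set \<Rightarrow> 'e set \<Rightarrow> ('e \<Rightarrow> 'v \<times> 'v) \<Rightarrow> bool" where
  "wf_graph V E ends \<longleftrightarrow> finite V \<and> finite E \<and>
     (\<forall>e\<in>E. fst (ends e) \<in> V \<and> snd (ends e) \<in> V)"

definition filtration :: "'v set \<Rightarrow> 'e set \<Rightarrow> ('e \<Rightarrow> 'v \<times> 'v) \<Rightarrow> ('v \<Rightarrow> real) \<Rightarrow> ('e \<Rightarrow> real) \<Rightarrow> bool" where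
  "filtration V E ends fv fe \<longleftrightarrow>
     (\<forall>e\<in>E. fv (fst (ends e)) \<le> fe e \<and> fv (snd (ends e)) \<le> fe e)"

text \<open>Degree (a self-loop contributes 2) and the degree filtration.\<close>
definition degree :: "'e set \<Rightarrow> ('e \<Rightarrow> 'v \<times> 'v) \<Rightarrow> 'v \<Rightarrow> nat" where
  "degree E ends v = card {e\<in>E. fst (ends e) = v} + card {e\<in>E. snd (ends e) = v}"

definition deg_fv :: "'e set \<Rightarrow> ('e \<Rightarrow> 'v \<times> 'v) \<Rightarrow> 'v \<Rightarrow> real" where
  "deg_fv E ends v = real (degree E ends v)"

definition deg_fe :: "'e set \<Rightarrow> ('e \<Rightarrow> 'v \<times> 'v) \<Rightarrow> 'e \<Rightarrow> real" where
  "deg_fe E ends e = max (deg_fv E ends (fst (ends e))) (deg_fv E ends (snd (ends e)))"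

type_synonym ('v, 'e) subgraph = "'v set \<times> 'e set"

definition fvals :: "'v set \<Rightarrow> 'e set \<Rightarrow> ('v \<Rightarrow> real) \<Rightarrow> ('e \<Rightarrow> real) \<Rightarrow> real set" where
  "fvals V E fv fe = fv ` V \<union> fe ` E"

text \<open>n+1 = number of distinct values; the values a_0 < ... < a_n.\<close>
definition nlev :: "'v set \<Rightarrow> 'e set \<Rightarrow> ('v \<Rightarrow> real) \<Rightarrow> ('e \<Rightarrow> real) \<Rightarrow> nat" where
  "nlev V E fv fe = card (fvals V E fv fe)"

definition lev :: "'v set \<Rightarrow> 'e set \<Rightarrow> ('v \<Rightarrow> real) \<Rightarrow> ('e \<Rightarrow> real) \<Rightarrow> nat \<Rightarrow> real" where
  "lev V E fv fe i = sorted_list_of_set (fvals V E fv fe) ! i"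

definition sublevel :: "'v set \<Rightarrow> 'e set \<Rightarrow> ('v \<Rightarrow> real) \<Rightarrow> ('e \<Rightarrow> real) \<Rightarrow> nat \<Rightarrow> ('v,'e) subgraph" where
  "sublevel V E fv fe i = ({v\<in>V. fv v \<le> lev V E fv fe i}, {e\<in>E. fe e \<le> lev V E fv fe i})"

text \<open>IC_j: cells of G_j minus G_{j-1} (i.e. cells of value a_j) together with the endpoints
  of those edges.\<close>
definition IC :: "'v set \<Rightarrow> 'e set \<Rightarrow> ('e \<Rightarrow> 'v \<times> 'v) \<Rightarrow> ('v \<Rightarrow> real) \<Rightarrow> ('e \<Rightarrow> real) \<Rightarrow> nat \<Rightarrow> ('v,'e) subgraph" where
  "IC V E ends fv fe j =
     ({v\<in>V. fv v = lev V E fv fe j} \<union>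
      {x. \<exists>e\<in>E. fe e = lev V E fv fe j \<and> (x = fst (ends e) \<or> x = snd (ends e))},
      {e\<in>E. fe e = lev V E fv fe j})"

definition sg_Union :: "('v,'e) subgraph set \<Rightarrow> ('v,'e) subgraph" where
  "sg_Union F = (\<Union> (fst ` F), \<Union> (snd ` F))"

text \<open>Every space occurring is a quotient X/A of a subgraph X of G by a subgraph A of X
  (A collapsed to a single point; X/{} = X). We represent it by the pair (X, A).
  All maps in the sequences are induced by the identity on the cells of G.\<close>

type_synonym ('v, 'e) space = "('v,'e) subgraph \<times> ('v,'e) subgraph"

definition fb_seq :: "'v set \<Rightarrow> 'e set \<Rightarrow> ('e \<Rightarrow> 'v \<times> 'v) \<Rightarrow> ('v \<Rightarrow> real) \<Rightarrow> ('e \<Rightarrow> real) \<Rightarrow> ('v,'e) space list" where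
  "fb_seq V E ends fv fe =
     map (\<lambda>i. (sublevel V E fv fe i, ({}, {}))) [0..<nlev V E fv fe] @
     map (\<lambda>k. ((V, E), sg_Union (IC V E ends fv fe ` {k..<nlev V E fv fe})))
         (rev [0..<nlev V E fv fe])"

datatype hg_op = Inc nat | Con nat

definition valid_schedule :: "nat \<Rightarrow> hg_op list \<Rightarrow> bool" where
  "valid_schedule N ops \<longleftrightarrow> distinct ops \<and>
     (\<forall>op\<in>set ops. case op of Inc j \<Rightarrow> j < N | Con j \<Rightarrow> j < N) \<and>
     (\<forall>p<length ops. \<forall>j. ops ! p = Con j \<longrightarrow> Inc j \<in> set (take p ops))"

definition hg_space :: "(nat \<Rightarrow> ('v,'e) subgraph) \<Rightarrow> hg_op list \<Rightarrow> nat \<Rightarrow> ('v,'e) space" where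
  "hg_space ICf ops p =
     (sg_Union {ICf j | j. Inc j \<in> set (take p ops)}, sg_Union {ICf j | j. Con j \<in> set (take p ops)})"

text \<open>The hourglass sequence of a schedule (starting with the empty space).\<close>
definition hg_seq :: "(nat \<Rightarrow> ('v,'e) subgraph) \<Rightarrow> hg_op list \<Rightarrow> ('v,'e) space list" where
  "hg_seq ICf ops = map (hg_space ICf ops) [0..<Suc (length ops)]"

definition zscale :: "bit \<Rightarrow> ('a \<Rightarrow> bit) \<Rightarrow> ('a \<Rightarrow> bit)" where
  "zscale c x = (\<lambda>i. c * x i)"

definition zdim :: "('a \<Rightarrow> bit) set \<Rightarrow> nat" where
  "zdim = vector_space.dim zscale"

text \<open>Quotient vertex: None is the collapsed point.\<close>
definition qv :: "('v,'e) subgraph \<Rightarrow> 'v \<Rightarrow> 'v option" where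
  "qv A v = (if v \<in> fst A then None else Some v)"

definition qverts :: "('v,'e) space \<Rightarrow> 'v option set" where
  "qverts S = qv (snd S) ` fst (fst S)"

definition qedges :: "('v,'e) space \<Rightarrow> 'e set" where
  "qedges S = snd (fst S) - snd (snd S)"

definition chains0 :: "('v,'e) space \<Rightarrow> ('v option \<Rightarrow> bit) set" where
  "chains0 S = {c. \<forall>w. w \<notin> qverts S \<longrightarrow> c w = 0}"

definition chains1 :: "('v,'e) space \<Rightarrow> ('e \<Rightarrow> bit) set" where
  "chains1 S = {c. \<forall>e. e \<notin> qedges S \<longrightarrow> c e = 0}"

definition incid :: "('e \<Rightarrow> 'v \<times> 'v) \<Rightarrow> ('v,'e) subgraph \<Rightarrow> 'v option \<Rightarrow> 'e \<Rightarrow> bit" where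
  "incid ends A w e = (if qv A (fst (ends e)) = w then 1 else 0) + (if qv A (snd (ends e)) = w then 1 else 0)"

definition bd :: "('e \<Rightarrow> 'v \<times> 'v) \<Rightarrow> ('v,'e) space \<Rightarrow> ('e \<Rightarrow> bit) \<Rightarrow> ('v option \<Rightarrow> bit)" where
  "bd ends S c = (\<lambda>w. \<Sum>e\<in>qedges S. c e * incid ends (snd S) w e)"

definition cycles1 :: "('e \<Rightarrow> 'v \<times> 'v) \<Rightarrow> ('v,'e) space \<Rightarrow> ('e \<Rightarrow> bit) set" where
  "cycles1 ends S = {c \<in> chains1 S. bd ends S c = 0}"

definition bounds0 :: "('e \<Rightarrow> 'v \<times> 'v) \<Rightarrow> ('v,'e) space \<Rightarrow> ('v option \<Rightarrow> bit) set" where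
  "bounds0 ends S = bd ends S ` chains1 S"

text \<open>The cellular map X/A \<rightarrow> Y/B induced by the identity (X \<subseteq> Y, A \<subseteq> B).\<close>
definition vmap :: "('v,'e) space \<Rightarrow> 'v option \<Rightarrow> 'v option" where
  "vmap T u = (case u of None \<Rightarrow> None | Some v \<Rightarrow> qv (snd T) v)"

definition push0 :: "('v,'e) space \<Rightarrow> ('v,'e) space \<Rightarrow> ('v option \<Rightarrow> bit) \<Rightarrow> ('v option \<Rightarrow> bit)" where
  "push0 S T c = (\<lambda>w. \<Sum>u\<in>{u \<in> qverts S. vmap T u = w}. c u)"

definition push1 :: "('v,'e) space \<Rightarrow> ('e \<Rightarrow> bit) \<Rightarrow> ('e \<Rightarrow> bit)" where
  "push1 T c = (\<lambda>e. if e \<in> qedges T then c e else 0)"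

text \<open>Rank of the induced map H_k(S;Z/2) \<rightarrow> H_k(T;Z/2). H_0 = C_0/B_0, H_1 = Z_1,
  H_k = 0 for k \<ge> 2 (graphs are 1-dimensional).\<close>
definition hrank :: "('e \<Rightarrow> 'v \<times> 'v) \<Rightarrow> nat \<Rightarrow> ('v,'e) space \<Rightarrow> ('v,'e) space \<Rightarrow> nat" where
  "hrank ends k S T =
     (if k = 0 then zdim (push0 S T ` chains0 S \<union> bounds0 ends T) - zdim (bounds0 ends T)
      else if k = 1 then zdim (push1 T ` cycles1 ends S)
      else 0)"

definition prk :: "('e \<Rightarrow> 'v \<times> 'v) \<Rightarrow> ('v,'e) space list \<Rightarrow> nat \<Rightarrow> int \<Rightarrow> int \<Rightarrow> int" where
  "prk ends Ss k i j =
     (if 0 \<le> i \<and> i \<le> j \<and> j < int (length Ss)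
      then int (hrank ends k (Ss ! nat i) (Ss ! nat j)) else 0)"

text \<open>Multiplicity of the interval [b, d] (positions) in the degree-k persistence diagram,
  i.e. in the interval decomposition of H_k applied to the sequence.\<close>
definition pdiag :: "('e \<Rightarrow> 'v \<times> 'v) \<Rightarrow> ('v,'e) space list \<Rightarrow> nat \<Rightarrow> nat \<times> nat \<Rightarrow> int" where
  "pdiag ends Ss k bd' =
     (let b = int (fst bd'); d = int (snd bd') in
      if b \<le> d \<and> d < int (length Ss)
      then prk ends Ss k b d - prk ends Ss k (b - 1) d - prk ends Ss k b (d + 1)
           + prk ends Ss k (b - 1) (d + 1)
      else 0)"

end

theory Submission
  imports Defs "HOL-Library.Option_ord"
begin


lemma zscale_vs: "vector_space (zscale :: bit \<Rightarrow> ('a \<Rightarrow> bit) \<Rightarrow> ('a \<Rightarrow> bit))"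
  by unfold_locales (auto simp: zscale_def fun_eq_iff algebra_simps)

interpretation Z: vector_space "zscale :: bit \<Rightarrow> ('a \<Rightarrow> bit) \<Rightarrow> ('a \<Rightarrow> bit)"
  by (rule zscale_vs)

lemma zdim_eq: "zdim = Z.dim"
  by (simp add: zdim_def)

lemma sum_fun_app: "(sum f A) x = sum (\<lambda>a. f a x) A"
  by (induct A rule: infinite_finite_induct) auto

definition ind :: "'a set \<Rightarrow> 'a \<Rightarrow> bit" where
  "ind A = (\<lambda>x. if x \<in> A then 1 else 0)"

definition sdiff :: "'a set \<Rightarrow> 'a set \<Rightarrow> 'a set" where
  "sdiff A B = (A - B) \<union> (B - A)"

lemma ind_empty[simp]: "ind {} = 0"
  by (simp add: ind_def fun_eq_iff)

lemma ind_sdiff: "ind (sdiff A B) = ind A + ind B"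
  by (auto simp: ind_def sdiff_def fun_eq_iff)

lemma ind_eq_0_iff: "ind A = 0 \<longleftrightarrow> A = {}"
  by (auto simp: ind_def fun_eq_iff)

lemma sdiff_sdiff: "sdiff (sdiff A B) B = A"
  by (auto simp: sdiff_def)

lemma zdim_insert_notin:
  assumes "finite S" "x \<notin> Z.span S"
  shows "Z.dim (insert x S) = Suc (Z.dim S)"
proof -
  obtain B where B: "B \<subseteq> S" "Z.independent B" "S \<subseteq> Z.span B" "card B = Z.dim S"
    using Z.basis_exists by blast
  have fB: "finite B" using B(1) assms(1) finite_subset by blast
  have spB: "Z.span B = Z.span S"
    using B Z.span_mono Z.span_span Z.span_eq by (metis)
  have xB: "x \<notin> Z.span B" using spB assms by simp
  have "x \<notin> B" using xB Z.span_base by blast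
  have ind: "Z.independent (insert x B)" using Z.independent_insertI[OF xB B(2)] .
  have "card (insert x B) = Z.dim (insert x S)"
  proof (rule Z.basis_card_eq_dim)
    show "insert x B \<subseteq> insert x S" using B(1) by blast
    show "insert x S \<subseteq> Z.span (insert x B)"
      using B(3) Z.span_mono[of B "insert x B"] Z.span_base[of x "insert x B"] by blast
    show "Z.independent (insert x B)" by fact
  qed
  then show ?thesis using fB \<open>x \<notin> B\<close> B(4) by simp
qed

lemma zdim_cong:
  assumes "A \<subseteq> Z.span B" "B \<subseteq> Z.span A"
  shows "Z.dim A = Z.dim B"
  using Z.span_eq_dim[OF Z.span_eq[THEN iffD2, OF conjI[OF assms]]] .

function rkl :: "'a::linorder set list \<Rightarrow> nat" where
  "rkl [] = 0"
| "rkl (v # vs) = (if v = {} then rkl vs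
     else Suc (rkl (map (\<lambda>w. if Min v \<in> w then sdiff w v else w) vs)))"
  by pat_completeness auto
termination by (relation "measure length") auto

lemma span_vanish:
  assumes "\<forall>x\<in>A. p \<notin> x"
  shows "\<forall>g \<in> Z.span (ind ` A). g p = 0"
proof -
  have "Z.subspace {g :: 'a \<Rightarrow> bit. g p = 0}"
    by (auto simp: Z.subspace_def zscale_def)
  moreover have "ind ` A \<subseteq> {g. g p = 0}" using assms by (auto simp: ind_def)
  ultimately show ?thesis using Z.span_minimal by blast
qed

lemma rkl_correct:
  "(\<forall>v\<in>set vs. finite v) \<Longrightarrow> Z.dim (ind ` set vs) = rkl vs"
proof (induction vs rule: rkl.induct)
  case 1
  then show ?case using Z.dim_eq_card_independent[OF Z.independent_empty] by simp
next
  case (2 v vs)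
  show ?case
  proof (cases "v = {}")
    case True
    have "Z.dim (ind ` set (v # vs)) = Z.dim (insert 0 (ind ` set vs))" using True by simp
    also have "\<dots> = Z.dim (ind ` set vs)"
      using Z.span_insert_0 Z.span_eq_dim by blast
    finally show ?thesis using True 2 by simp
  next
    case False
    define p where "p = Min v"
    define f where "f = (\<lambda>w. if p \<in> w then sdiff w v else w)"
    have fin: "finite v" using 2(3) by simp
    have pv: "p \<in> v" using False fin by (simp add: p_def)
    have IH: "Z.dim (ind ` set (map f vs)) = rkl (map f vs)"
      using 2(2)[OF False] 2(3) by (auto simp: f_def p_def sdiff_def)
    have fw: "ind (f w) = ind w + ind v \<or> ind (f w) = ind w" for w
      by (auto simp: f_def ind_sdiff)
    have fw2: "ind w = ind (f w) + ind v \<or> ind w = ind (f w)" for w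
      using fw[of w] by (auto simp: fun_eq_iff)
    have span_eq: "Z.span (insert (ind v) (ind ` set vs)) = Z.span (insert (ind v) (ind ` set (map f vs)))"
    proof -
      have a: "insert (ind v) (ind ` set vs) \<subseteq> Z.span (insert (ind v) (ind ` set (map f vs)))"
      proof
        fix x assume "x \<in> insert (ind v) (ind ` set vs)"
        then consider "x = ind v" | w where "w \<in> set vs" "x = ind w" by blast
        then show "x \<in> Z.span (insert (ind v) (ind ` set (map f vs)))"
        proof cases
          case 1 then show ?thesis by (simp add: Z.span_base)
        next
          case 2
          have b1: "ind (f w) \<in> Z.span (insert (ind v) (ind ` set (map f vs)))"
            using 2 by (intro Z.span_base) auto
          have b2: "ind v \<in> Z.span (insert (ind v) (ind ` set (map f vs)))"
            by (intro Z.span_base) auto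
          show ?thesis using fw2[of w] 2 Z.span_add[OF b1 b2] b1 by auto
        qed
      qed
      have b: "insert (ind v) (ind ` set (map f vs)) \<subseteq> Z.span (insert (ind v) (ind ` set vs))"
      proof
        fix x assume "x \<in> insert (ind v) (ind ` set (map f vs))"
        then consider "x = ind v" | w where "w \<in> set vs" "x = ind (f w)" by auto
        then show "x \<in> Z.span (insert (ind v) (ind ` set vs))"
        proof cases
          case 1 then show ?thesis by (simp add: Z.span_base)
        next
          case 2
          have b1: "ind w \<in> Z.span (insert (ind v) (ind ` set vs))"
            using 2 by (intro Z.span_base) auto
          have b2: "ind v \<in> Z.span (insert (ind v) (ind ` set vs))"
            by (intro Z.span_base) auto
          show ?thesis using fw[of w] 2 Z.span_add[OF b1 b2] b1 by auto
        qed
      qed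
      show ?thesis using Z.span_eq[THEN iffD2, OF conjI[OF a b]] .
    qed
    have notin: "ind v \<notin> Z.span (ind ` set (map f vs))"
    proof
      assume "ind v \<in> Z.span (ind ` set (map f vs))"
      moreover have "\<forall>x\<in>set (map f vs). p \<notin> x"
        using pv by (auto simp: f_def sdiff_def)
      ultimately have "ind v p = 0" using span_vanish[of "set (map f vs)" p] by auto
      then show False using pv by (simp add: ind_def)
    qed
    have "Z.dim (ind ` set (v # vs)) = Z.dim (insert (ind v) (ind ` set (map f vs)))"
      using Z.span_eq_dim[OF span_eq] by (simp only: list.set image_insert set_map image_comp)
    also have "\<dots> = Suc (Z.dim (ind ` set (map f vs)))"
      by (rule zdim_insert_notin[OF _ notin]) simp
    also have "\<dots> = Suc (rkl (map f vs))" using IH by simp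
    also have "\<dots> = rkl (v # vs)" using False by (simp only: rkl.simps f_def p_def if_False)
    finally show ?thesis .
  qed
qed


definition bdv :: "('e \<Rightarrow> 'v \<times> 'v) \<Rightarrow> ('v,'e) space \<Rightarrow> 'e \<Rightarrow> 'v option set" where
  "bdv ends T e = sdiff {qv (snd T) (fst (ends e))} {qv (snd T) (snd (ends e))}"

definition bdl :: "('e \<Rightarrow> 'v \<times> 'v) \<Rightarrow> ('v,'e) space \<Rightarrow> 'e list \<Rightarrow> 'v option set" where
  "bdl ends S l = foldr (\<lambda>e acc. sdiff (bdv ends S e) acc) l {}"

lemma zscale_0[simp]: "zscale 0 x = 0" and zscale_1[simp]: "zscale 1 x = x"
  by (auto simp: zscale_def fun_eq_iff)

lemma incid_ind: "incid ends (snd T) w e = ind (bdv ends T e) w"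
  by (auto simp: incid_def ind_def sdiff_def bdv_def)

lemma bd_sum: "finite (qedges S) \<Longrightarrow>
   bd ends S c = (\<Sum>e\<in>qedges S. zscale (c e) (ind (bdv ends S e)))"
  by (simp add: fun_eq_iff bd_def sum_fun_app zscale_def incid_ind)

lemma push0_sum: "finite (qverts S) \<Longrightarrow>
   push0 S T c = (\<Sum>u\<in>qverts S. zscale (c u) (ind {vmap T u}))"
proof (rule ext)
  fix w assume f: "finite (qverts S)"
  have pw: "\<And>u. zscale (c u) (ind {vmap T u}) w = (if vmap T u = w then c u else 0)"
    by (auto simp: zscale_def ind_def)
  have "(\<Sum>u\<in>qverts S. zscale (c u) (ind {vmap T u})) w = (\<Sum>u\<in>qverts S. if vmap T u = w then c u else 0)"
    by (simp only: sum_fun_app pw)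
  also have "\<dots> = (\<Sum>u\<in>{u \<in> qverts S. vmap T u = w}. c u)"
    using f by (simp add: sum.inter_filter)
  finally show "push0 S T c w = (\<Sum>u\<in>qverts S. zscale (c u) (ind {vmap T u})) w"
    by (simp add: push0_def)
qed

lemma ind_single_sum: "finite Q \<Longrightarrow> u \<in> Q \<Longrightarrow> (\<Sum>u'\<in>Q. zscale (ind {u} u') (g u')) = g u"
proof -
  assume "finite Q" "u \<in> Q"
  then have "(\<Sum>u'\<in>Q. zscale (ind {u} u') (g u')) = (\<Sum>u'\<in>Q. if u' = u then g u' else 0)"
    by (intro sum.cong) (auto simp: ind_def)
  also have "\<dots> = g u" using \<open>finite Q\<close> \<open>u \<in> Q\<close> by (simp add: sum.delta')
  finally show ?thesis .
qed

lemma push0_single: "finite (qverts S) \<Longrightarrow> u \<in> qverts S \<Longrightarrow> push0 S T (ind {u}) = ind {vmap T u}"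
  by (simp only: push0_sum ind_single_sum)

lemma bd_single: "finite (qedges S) \<Longrightarrow> e \<in> qedges S \<Longrightarrow> bd ends S (ind {e}) = ind (bdv ends S e)"
  by (simp only: bd_sum ind_single_sum)

lemma span_sum_gen: "finite Q \<Longrightarrow> (\<And>u. u \<in> Q \<Longrightarrow> g u \<in> Z.span G) \<Longrightarrow>
   (\<Sum>u\<in>Q. zscale (c u) (g u)) \<in> Z.span G"
  by (intro Z.span_sum Z.span_scale) auto

lemma span_Un_mono: "A \<subseteq> Z.span X \<Longrightarrow> B \<subseteq> Z.span Y \<Longrightarrow> A \<union> B \<subseteq> Z.span (X \<union> Y)"
  using Z.span_mono[of X "X \<union> Y"] Z.span_mono[of Y "X \<union> Y"] by blast

lemma hrank0_eq:
  assumes fS: "finite (qverts S)" and fT: "finite (qedges T)"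
  shows "hrank ends 0 S T =
    Z.dim (ind ` ((\<lambda>u. {vmap T u}) ` qverts S \<union> bdv ends T ` qedges T)) - Z.dim (ind ` bdv ends T ` qedges T)"
proof -
  have B1: "bounds0 ends T \<subseteq> Z.span (ind ` bdv ends T ` qedges T)"
  proof
    fix x assume "x \<in> bounds0 ends T"
    then obtain c where "x = bd ends T c" by (auto simp: bounds0_def)
    then show "x \<in> Z.span (ind ` bdv ends T ` qedges T)"
      using bd_sum[OF fT] by (auto intro!: span_sum_gen[OF fT] intro: Z.span_base)
  qed
  have B2: "ind ` bdv ends T ` qedges T \<subseteq> Z.span (bounds0 ends T)"
  proof
    fix x assume "x \<in> ind ` bdv ends T ` qedges T"
    then obtain e where e: "e \<in> qedges T" "x = ind (bdv ends T e)" by auto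
    have "ind {e} \<in> chains1 T" using e by (auto simp: chains1_def ind_def)
    then have "x \<in> bounds0 ends T" unfolding bounds0_def e(2) bd_single[OF fT e(1), of ends, symmetric]
      by (rule imageI)
    then show "x \<in> Z.span (bounds0 ends T)" by (rule Z.span_base)
  qed
  have P1: "push0 S T ` chains0 S \<subseteq> Z.span (ind ` (\<lambda>u. {vmap T u}) ` qverts S)"
  proof
    fix x assume "x \<in> push0 S T ` chains0 S"
    then obtain c where "x = push0 S T c" by auto
    then show "x \<in> Z.span (ind ` (\<lambda>u. {vmap T u}) ` qverts S)"
      using push0_sum[OF fS] by (auto intro!: span_sum_gen[OF fS] intro: Z.span_base)
  qed
  have P2: "ind ` (\<lambda>u. {vmap T u}) ` qverts S \<subseteq> Z.span (push0 S T ` chains0 S)"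
  proof
    fix x assume "x \<in> ind ` (\<lambda>u. {vmap T u}) ` qverts S"
    then obtain u where u: "u \<in> qverts S" "x = ind {vmap T u}" by auto
    have "ind {u} \<in> chains0 S" using u by (auto simp: chains0_def ind_def)
    then have "x \<in> push0 S T ` chains0 S" unfolding u(2) push0_single[OF fS u(1), of T, symmetric]
      by (rule imageI)
    then show "x \<in> Z.span (push0 S T ` chains0 S)" by (rule Z.span_base)
  qed
  have e1: "Z.dim (bounds0 ends T) = Z.dim (ind ` bdv ends T ` qedges T)"
    by (rule zdim_cong[OF B1 B2])
  have e2: "Z.dim (push0 S T ` chains0 S \<union> bounds0 ends T) =
     Z.dim (ind ` ((\<lambda>u. {vmap T u}) ` qverts S \<union> bdv ends T ` qedges T))"
    unfolding image_Un
    by (rule zdim_cong[OF span_Un_mono[OF P1 B1] span_Un_mono[OF P2 B2]])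
  show ?thesis using e1 e2 by (simp add: hrank_def zdim_eq)
qed

lemma sum_ind_subset: "finite Q \<Longrightarrow> A \<subseteq> Q \<Longrightarrow> (\<Sum>e\<in>Q. zscale (ind A e) (g e)) = (\<Sum>e\<in>A. g e)"
proof -
  assume f: "finite Q" and A: "A \<subseteq> Q"
  have "(\<Sum>e\<in>Q. zscale (ind A e) (g e)) = (\<Sum>e\<in>Q. if e \<in> A then g e else 0)"
    by (intro sum.cong) (auto simp: ind_def)
  also have "\<dots> = (\<Sum>e\<in>{e\<in>Q. e \<in> A}. g e)" using f by (simp add: sum.inter_filter)
  also have "{e\<in>Q. e \<in> A} = A" using A by auto
  finally show ?thesis .
qed

lemma bd_ind_list:
  assumes f: "finite (qedges S)" and d: "distinct l" and sub: "set l \<subseteq> qedges S"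
  shows "bd ends S (ind (set l)) = ind (bdl ends S l)"
proof -
  have "bd ends S (ind (set l)) = (\<Sum>e\<in>set l. ind (bdv ends S e))"
    using bd_sum[OF f] sum_ind_subset[OF f sub] by simp
  also have "\<dots> = ind (bdl ends S l)"
    using d by (induction l) (auto simp: bdl_def ind_sdiff)
  finally show ?thesis .
qed

lemma cycles_eq:
  fixes S T :: "('v, 'e::linorder) space"
  assumes f: "finite (qedges S)"
  shows "push1 T ` cycles1 ends S =
    ind ` set (map (\<lambda>l. set l \<inter> qedges T) (filter (\<lambda>l. bdl ends S l = {}) (subseqs (sorted_list_of_set (qedges S)))))"
    (is "?L = ?R")
proof
  let ?qs = "sorted_list_of_set (qedges S)"
  have sq: "set ?qs = qedges S" "distinct ?qs" using f by auto
  have p1: "push1 T (ind A) = ind (A \<inter> qedges T)" for A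
    by (auto simp: push1_def ind_def fun_eq_iff)
  show "?L \<subseteq> ?R"
  proof
    fix x assume "x \<in> ?L"
    then obtain c where c: "c \<in> chains1 S" "bd ends S c = 0" "x = push1 T c"
      by (auto simp: cycles1_def)
    define F where "F = {e. c e \<noteq> 0}"
    have cF: "c = ind F" by (auto simp: F_def ind_def fun_eq_iff)
    have FS: "F \<subseteq> qedges S" using c(1) by (auto simp: F_def chains1_def)
    then obtain l where l: "l \<in> set (subseqs ?qs)" "set l = F"
      using subset_subseqs[of F ?qs] sq by auto
    have dl: "distinct l" using subseqs_distinctD[OF l(1) sq(2)] .
    have "ind (bdl ends S l) = 0" using c(2) cF bd_ind_list[OF f dl] l FS by simp
    then have "bdl ends S l = {}" by (simp add: ind_eq_0_iff)
    then show "x \<in> ?R" using l c(3) cF p1 by auto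
  qed
  show "?R \<subseteq> ?L"
  proof
    fix x assume "x \<in> ?R"
    then obtain l where l: "l \<in> set (subseqs ?qs)" "bdl ends S l = {}" "x = ind (set l \<inter> qedges T)"
      by auto
    have dl: "distinct l" using subseqs_distinctD[OF l(1) sq(2)] .
    have ls: "set l \<subseteq> qedges S" using l(1) subseqs_powset[of ?qs] sq by auto
    have "ind (set l) \<in> cycles1 ends S"
      using ls bd_ind_list[OF f dl ls] l(2) by (auto simp: cycles1_def chains1_def ind_def)
    then show "x \<in> ?L" using l(3) p1 by (metis image_eqI)
  qed
qed

definition hrank_c :: "('e::linorder \<Rightarrow> 'v::linorder \<times> 'v) \<Rightarrow> nat \<Rightarrow> ('v,'e) space \<Rightarrow> ('v,'e) space \<Rightarrow> nat" where
  "hrank_c ends k S T =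
    (if k = 0 then
       rkl (map (\<lambda>u. {vmap T u}) (sorted_list_of_set (qverts S)) @ map (bdv ends T) (sorted_list_of_set (qedges T)))
       - rkl (map (bdv ends T) (sorted_list_of_set (qedges T)))
     else if k = 1 then
       rkl (map (\<lambda>l. set l \<inter> qedges T) (filter (\<lambda>l. bdl ends S l = {}) (subseqs (sorted_list_of_set (qedges S)))))
     else 0)"

lemma finite_bdv: "finite (bdv ends T e)"
  by (simp add: bdv_def sdiff_def)

lemma hrank_c_eq:
  fixes S T :: "('v::linorder, 'e::linorder) space"
  assumes A: "finite (qverts S)" "finite (qedges S)" "finite (qedges T)"
  shows "hrank ends k S T = hrank_c ends k S T"
proof -
  consider "k = 0" | "k = 1" | "k \<noteq> 0 \<and> k \<noteq> 1" by blast
  then show ?thesis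
  proof cases
    case 1
    define L1 where "L1 = map (\<lambda>u. {vmap T u}) (sorted_list_of_set (qverts S)) @ map (bdv ends T) (sorted_list_of_set (qedges T))"
    define L2 where "L2 = map (bdv ends T) (sorted_list_of_set (qedges T))"
    have a: "ind ` ((\<lambda>u. {vmap T u}) ` qverts S \<union> bdv ends T ` qedges T) = ind ` set L1"
      using A by (simp add: L1_def)
    have b: "ind ` bdv ends T ` qedges T = ind ` set L2"
      using A by (simp add: L2_def)
    have f1: "\<forall>v\<in>set L1. finite v" by (auto simp: L1_def finite_bdv)
    have f2: "\<forall>v\<in>set L2. finite v" by (auto simp: L2_def finite_bdv)
    have "hrank ends 0 S T = Z.dim (ind ` set L1) - Z.dim (ind ` set L2)"
      using hrank0_eq[OF A(1,3), of ends] unfolding a b .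
    also have "\<dots> = rkl L1 - rkl L2" using rkl_correct[OF f1] rkl_correct[OF f2] by simp
    also have "\<dots> = hrank_c ends 0 S T" unfolding hrank_c_def L1_def L2_def by (rule if_P[symmetric]) (rule refl)
    finally show ?thesis using 1 by simp
  next
    case 2
    define L where "L = map (\<lambda>l. set l \<inter> qedges T) (filter (\<lambda>l. bdl ends S l = {}) (subseqs (sorted_list_of_set (qedges S))))"
    have f: "\<forall>v\<in>set L. finite v" by (auto simp: L_def)
    have "hrank ends 1 S T = Z.dim (push1 T ` cycles1 ends S)" by (simp add: hrank_def zdim_eq)
    also have "\<dots> = Z.dim (ind ` set L)" unfolding cycles_eq[OF A(2), of T ends] L_def ..
    also have "\<dots> = rkl L" by (rule rkl_correct[OF f])
    also have "\<dots> = hrank_c ends 1 S T" by (simp add: hrank_c_def L_def)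
    finally show ?thesis using 2 by simp
  next
    case 3
    then show ?thesis by (simp add: hrank_c_def hrank_def)
  qed
qed



lemma set_take_rev_upt: "m \<le> N \<Longrightarrow> set (take m (rev [0..<N])) = {N-m..<N}"
  by (simp add: take_rev)

lemma part1:
  fixes V :: "'v set" and E :: "'e set"
  assumes wf: "wf_graph V E ends" and filt: "filtration V E ends fv fe"
  shows "\<exists>ops. valid_schedule (nlev V E fv fe) ops \<and>
             hg_seq (IC V E ends fv fe) ops = (({}, {}), ({}, {})) # fb_seq V E ends fv fe"
proof -
  define N where "N = nlev V E fv fe"
  define ICf where "ICf = IC V E ends fv fe"
  define lv where "lv = lev V E fv fe"
  define F where "F = fvals V E fv fe"
  define xs where "xs = sorted_list_of_set F"
  define ops where "ops = map Inc [0..<N] @ map Con (rev [0..<N])"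
  have finF: "finite F" using wf by (simp add: F_def fvals_def wf_graph_def)
  have lenxs: "length xs = N" using finF by (simp add: xs_def N_def nlev_def F_def)
  have setxs: "set xs = F" using finF by (simp add: xs_def)
  have sxs: "sorted_wrt (<) xs" by (simp add: xs_def)
  have lvxs: "lv j = xs ! j" for j by (simp add: lv_def lev_def xs_def F_def)
  have lev_in: "lv j \<in> F" if "j < N" for j using that lenxs setxs lvxs nth_mem by metis
  have lev_ex: "\<exists>j<N. lv j = x" if "x \<in> F" for x
    using that setxs lenxs lvxs by (metis in_set_conv_nth)
  have lev_lt: "lv j < lv i" if "j < i" "i < N" for i j
    using sxs that lenxs lvxs by (simp add: sorted_wrt_iff_nth_less)
  have lev_mono: "lv j \<le> lv i \<longleftrightarrow> j \<le> i" if "i < N" "j < N" for i j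
  proof (cases "j \<le> i")
    case True then show ?thesis using lev_lt[of j i] that by (cases "j = i") auto
  next
    case False then show ?thesis using lev_lt[of i j] that by auto
  qed
  have Vends: "fst (ends e) \<in> V" "snd (ends e) \<in> V" if "e \<in> E" for e
    using wf that by (auto simp: wf_graph_def)
  have fvF: "fv v \<in> F" if "v \<in> V" for v using that by (simp add: F_def fvals_def)
  have feF: "fe e \<in> F" if "e \<in> E" for e using that by (simp add: F_def fvals_def)
  have U: "sg_Union (ICf ` {..<Suc i}) = sublevel V E fv fe i" if iN: "i < N" for i
  proof -
    have A: "(\<Union>j\<in>{..<Suc i}. fst (ICf j)) = {v\<in>V. fv v \<le> lv i}"
    proof (rule set_eqI, rule iffI)
      fix x assume "x \<in> (\<Union>j\<in>{..<Suc i}. fst (ICf j))"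
      then obtain j where j: "j \<le> i" "x \<in> fst (ICf j)" by (auto simp: less_Suc_eq_le)
      have jN: "j < N" using j iN by simp
      from j(2) consider "x \<in> V" "fv x = lv j"
        | e where "e \<in> E" "fe e = lv j" "x = fst (ends e) \<or> x = snd (ends e)"
        by (auto simp: ICf_def IC_def lv_def)
      then show "x \<in> {v\<in>V. fv v \<le> lv i}"
      proof cases
        case 1 then show ?thesis using lev_mono[OF iN jN] j(1) by simp
      next
        case 2
        have "fv x \<le> fe e" using filt 2 by (auto simp: filtration_def)
        then show ?thesis using lev_mono[OF iN jN] j(1) 2 Vends by auto
      qed
    next
      fix x assume x: "x \<in> {v\<in>V. fv v \<le> lv i}"
      then obtain j where j: "j < N" "lv j = fv x" using lev_ex fvF by blast
      have "j \<le> i" using lev_mono[OF iN j(1)] j x by simp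
      moreover have "x \<in> fst (ICf j)" using x j by (auto simp: ICf_def IC_def lv_def)
      ultimately show "x \<in> (\<Union>j\<in>{..<Suc i}. fst (ICf j))" by (auto simp: less_Suc_eq_le)
    qed
    have B: "(\<Union>j\<in>{..<Suc i}. snd (ICf j)) = {e\<in>E. fe e \<le> lv i}"
    proof (rule set_eqI, rule iffI)
      fix x assume "x \<in> (\<Union>j\<in>{..<Suc i}. snd (ICf j))"
      then obtain j where j: "j \<le> i" "x \<in> snd (ICf j)" by (auto simp: less_Suc_eq_le)
      have jN: "j < N" using j iN by simp
      then show "x \<in> {e\<in>E. fe e \<le> lv i}"
        using j lev_mono[OF iN jN] by (auto simp: ICf_def IC_def lv_def)
    next
      fix x assume x: "x \<in> {e\<in>E. fe e \<le> lv i}"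
      then obtain j where j: "j < N" "lv j = fe x" using lev_ex feF by blast
      have "j \<le> i" using lev_mono[OF iN j(1)] j x by simp
      moreover have "x \<in> snd (ICf j)" using x j by (auto simp: ICf_def IC_def lv_def)
      ultimately show "x \<in> (\<Union>j\<in>{..<Suc i}. snd (ICf j))" by (auto simp: less_Suc_eq_le)
    qed
    show ?thesis using A B by (simp add: sg_Union_def sublevel_def lv_def image_image)
  qed
  have All: "sg_Union (ICf ` {..<N}) = (V, E)" if "0 < N"
  proof -
    have "sg_Union (ICf ` {..<N}) = sublevel V E fv fe (N - 1)"
      using U[of "N - 1"] that by simp
    also have "\<dots> = (V, E)"
    proof -
      have "fv v \<le> lv (N - 1)" if "v \<in> V" for v
        using lev_ex[OF fvF[OF that]] lev_mono[of "N - 1"] \<open>0 < N\<close> by fastforce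
      moreover have "fe e \<le> lv (N - 1)" if "e \<in> E" for e
        using lev_ex[OF feF[OF that]] lev_mono[of "N - 1"] \<open>0 < N\<close> by fastforce
      ultimately show ?thesis by (auto simp: sublevel_def lv_def)
    qed
    finally show ?thesis .
  qed
  have lenops: "length ops = 2 * N" by (simp add: ops_def)
  have HS1: "hg_space ICf ops p = (sg_Union (ICf ` {..<p}), ({}, {}))" if "p \<le> N" for p
  proof -
    have "take p ops = map Inc [0..<p]" using that by (simp add: ops_def take_map)
    then have st: "set (take p ops) = Inc ` {..<p}" by auto
    have a: "{ICf j |j. Inc j \<in> set (take p ops)} = ICf ` {..<p}" unfolding st by auto
    have b: "{ICf j |j. Con j \<in> set (take p ops)} = {}" unfolding st by auto
    show ?thesis unfolding hg_space_def a b by (simp add: sg_Union_def)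
  qed
  have HS2: "hg_space ICf ops (N + m) = (sg_Union (ICf ` {..<N}), sg_Union (ICf ` {N-m..<N}))"
    if "m \<le> N" for m
  proof -
    have "take (N + m) ops = map Inc [0..<N] @ map Con (take m (rev [0..<N]))"
      by (simp add: ops_def take_map)
    then have st: "set (take (N + m) ops) = Inc ` {..<N} \<union> Con ` {N-m..<N}"
      using set_take_rev_upt[OF that] by auto
    have a: "{ICf j |j. Inc j \<in> set (take (N + m) ops)} = ICf ` {..<N}" unfolding st by auto
    have b: "{ICf j |j. Con j \<in> set (take (N + m) ops)} = ICf ` {N-m..<N}" unfolding st by auto
    show ?thesis unfolding hg_space_def a b ..
  qed
  have valid: "valid_schedule N ops"
  proof -
    have d: "distinct ops" by (auto simp: ops_def distinct_map inj_on_def)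
    have b: "\<forall>op\<in>set ops. case op of Inc j \<Rightarrow> j < N | Con j \<Rightarrow> j < N" by (auto simp: ops_def)
    have c: "Inc j \<in> set (take p ops)" if "p < length ops" "ops ! p = Con j" for p j
    proof -
      have "\<not> p < N" using that by (auto simp: ops_def nth_append split: if_splits)
      have "Con j \<in> set ops" using that nth_mem by metis
      then have "j < N" by (auto simp: ops_def)
      moreover have "set (take N ops) \<subseteq> set (take p ops)"
        using \<open>\<not> p < N\<close> by (simp add: set_take_subset_set_take)
      moreover have "take N ops = map Inc [0..<N]" by (simp add: ops_def)
      ultimately show ?thesis by auto
    qed
    show ?thesis using d b c by (simp add: valid_schedule_def)
  qed
  have seq: "hg_seq ICf ops = (({}, {}), ({}, {})) # fb_seq V E ends fv fe"
  proof (rule nth_equalityI)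
    show "length (hg_seq ICf ops) = length ((({}, {}), ({}, {})) # fb_seq V E ends fv fe)"
      by (simp add: hg_seq_def fb_seq_def lenops N_def)
  next
    fix p assume "p < length (hg_seq ICf ops)"
    then have p: "p < Suc (2 * N)" by (simp add: hg_seq_def lenops)
    have lhs: "hg_seq ICf ops ! p = hg_space ICf ops p"
      using p by (simp add: hg_seq_def lenops nth_map_upt del: upt_Suc)
    consider "p = 0" | "0 < p" "p \<le> N" | "N < p" by arith
    then show "hg_seq ICf ops ! p = ((({}, {}), ({}, {})) # fb_seq V E ends fv fe) ! p"
    proof cases
      case 1 then show ?thesis using lhs HS1[of 0] by (simp add: sg_Union_def)
    next
      case 2
      then obtain i where i: "p = Suc i" "i < N" by (cases p) auto
      have "((({}, {}), ({}, {})) # fb_seq V E ends fv fe) ! p = (sublevel V E fv fe i, ({}, {}))"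
        using i by (simp add: fb_seq_def nth_append N_def)
      then show ?thesis using lhs HS1[of p] 2 U[OF i(2)] i by simp
    next
      case 3
      define m where "m = p - Suc N"
      have m: "p = N + Suc m" "m < N" using p 3 by (simp_all add: m_def)
      have r: "rev [0..<N] ! m = N - Suc m" using m by (simp add: rev_nth)
      have "((({}, {}), ({}, {})) # fb_seq V E ends fv fe) ! p =
            ((V, E), sg_Union (IC V E ends fv fe ` {N - Suc m..<N}))"
        using m r by (simp add: fb_seq_def nth_append N_def)
      then show ?thesis using lhs HS2[of "Suc m"] m All by (simp add: ICf_def)
    qed
  qed
  show ?thesis using valid seq by (auto simp: N_def ICf_def)
qed



lemma Collect_ins: "{x. x \<in> insert a A \<and> P x} = (if P a then insert a {x. x\<in>A \<and> P x} else {x. x\<in>A \<and> P x})"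
  and Collect_emp: "{x. x \<in> {} \<and> P x} = {}"
  by auto

definition "ends1 = (\<lambda>e::nat. if e = 0 then (0::nat,0::nat) else if e = 1 then (0,1) else (2,2))"
definition "V1 = {0,1,2::nat}"
definition "E1 = {0,1,2::nat}"

definition "fv1 = (\<lambda>v::nat. if v = 0 then 3 else if v = 1 then 1 else if v = 2 then 2 else (0::real))"
definition "fe1 = (\<lambda>e::nat. if e = 0 \<or> e = 1 then 3 else (2::real))"

lemma degv1: "deg_fv E1 ends1 = fv1"
proof
  fix v
  show "deg_fv E1 ends1 v = fv1 v"
    unfolding deg_fv_def degree_def E1_def
    by (simp only: Collect_ins Collect_emp) (auto simp: ends1_def fv1_def)
qed

lemma dege1: "deg_fe E1 ends1 = fe1"
  unfolding deg_fe_def degv1 by (auto simp: fun_eq_iff fv1_def fe1_def ends1_def)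

lemma fvals1: "fvals V1 E1 fv1 fe1 = {1,2,3}"
  by (auto simp: fvals_def V1_def E1_def fv1_def fe1_def)

lemma nlev1: "nlev V1 E1 fv1 fe1 = 3"
  by (simp add: nlev_def fvals1)

lemma lev1: "lev V1 E1 fv1 fe1 0 = 1"
  "lev V1 E1 fv1 fe1 1 = 2"
  "lev V1 E1 fv1 fe1 2 = 3"
  by (simp_all add: lev_def fvals1)

lemma IC1: "IC V1 E1 ends1 fv1 fe1 0 = ({1},{})"
  "IC V1 E1 ends1 fv1 fe1 1 = ({2},{2})"
  "IC V1 E1 ends1 fv1 fe1 2 = ({0,1},{0,1})"
  unfolding IC_def lev1 by (auto simp: V1_def E1_def fv1_def fe1_def ends1_def)

lemma sub1: "sublevel V1 E1 fv1 fe1 0 = ({1},{})"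
  "sublevel V1 E1 fv1 fe1 1 = ({1,2},{2})"
  "sublevel V1 E1 fv1 fe1 2 = ({0,1,2},{0,1,2})"
  unfolding sublevel_def lev1 by (auto simp: V1_def E1_def fv1_def fe1_def)

lemma ivs3: "{0..<3::nat} = {0,1,2}" "{1..<3::nat} = {1,2}" "{2..<3::nat} = {2}" "[0..<3] = [0,1,2]"
  by (auto simp: upt_rec)



definition FB1 :: "(nat,nat) space list" where "FB1 = [(({1},{}),({},{})), (({1,2},{2}),({},{})), (({0,1,2},{0,1,2}),({},{})),
   (({0,1,2},{0,1,2}),({0,1},{0,1})), (({0,1,2},{0,1,2}),({0,1,2},{0,1,2})), (({0,1,2},{0,1,2}),({0,1,2},{0,1,2}))]"
definition FB2 :: "(nat,nat) space list" where "FB2 = [(({1},{}),({},{})), (({0,1,2},{0,1}),({},{})), (({0,1,2,3},{0,1,2,3}),({},{})),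
   (({0,1,2,3},{0,1,2,3}),({2,3},{2,3})), (({0,1,2,3},{0,1,2,3}),({0,1,2,3},{0,1,2,3})),
   (({0,1,2,3},{0,1,2,3}),({0,1,2,3},{0,1,2,3}))]"

lemma fb1: "fb_seq V1 E1 ends1 fv1 fe1 = FB1"
  unfolding FB1_def fb_seq_def nlev1 by (simp add: ivs3[simplified] sub1[simplified] IC1[simplified] sg_Union_def) (simp add: V1_def E1_def insert_commute)


definition "ends2 = (\<lambda>e::nat. if e = 0 then (0::nat,0::nat) else if e = 1 then (1,2) else if e = 2 then (2,3) else (3,3))"
definition "V2 = {0,1,2,3::nat}"
definition "E2 = {0,1,2,3::nat}"

definition "fv2 = (\<lambda>v::nat. if v = 0 then 2 else if v = 1 then 1 else if v = 2 then 2 else if v = 3 then 3 else (0::real))"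
definition "fe2 = (\<lambda>e::nat. if e = 0 \<or> e = 1 then 2 else (3::real))"

lemma degv2: "deg_fv E2 ends2 = fv2"
proof
  fix v
  show "deg_fv E2 ends2 v = fv2 v"
    unfolding deg_fv_def degree_def E2_def
    by (simp only: Collect_ins Collect_emp) (auto simp: ends2_def fv2_def)
qed

lemma dege2: "deg_fe E2 ends2 = fe2"
  unfolding deg_fe_def degv2 by (auto simp: fun_eq_iff fv2_def fe2_def ends2_def)

lemma fvals2: "fvals V2 E2 fv2 fe2 = {1,2,3}"
  by (auto simp: fvals_def V2_def E2_def fv2_def fe2_def)

lemma nlev2: "nlev V2 E2 fv2 fe2 = 3"
  by (simp add: nlev_def fvals2)

lemma lev2: "lev V2 E2 fv2 fe2 0 = 1"
  "lev V2 E2 fv2 fe2 1 = 2"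
  "lev V2 E2 fv2 fe2 2 = 3"
  by (simp_all add: lev_def fvals2)

lemma IC2: "IC V2 E2 ends2 fv2 fe2 0 = ({1},{})"
  "IC V2 E2 ends2 fv2 fe2 1 = ({0,1,2},{0,1})"
  "IC V2 E2 ends2 fv2 fe2 2 = ({2,3},{2,3})"
  unfolding IC_def lev2 by (auto simp: V2_def E2_def fv2_def fe2_def ends2_def)

lemma sub2: "sublevel V2 E2 fv2 fe2 0 = ({1},{})"
  "sublevel V2 E2 fv2 fe2 1 = ({0,1,2},{0,1})"
  "sublevel V2 E2 fv2 fe2 2 = ({0,1,2,3},{0,1,2,3})"
  unfolding sublevel_def lev2 by (auto simp: V2_def E2_def fv2_def fe2_def)

lemma fb2: "fb_seq V2 E2 ends2 fv2 fe2 = FB2"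
  unfolding FB2_def fb_seq_def nlev2 by (simp add: ivs3[simplified] sub2[simplified] IC2[simplified] sg_Union_def) (auto simp: V2_def E2_def)

lemma hrank_c_eq_simp[simp]:
  fixes S T :: "(nat, nat) space"
  shows "finite (qverts S) \<Longrightarrow> finite (qedges S) \<Longrightarrow> finite (qedges T) \<Longrightarrow> hrank ends k S T = hrank_c ends k S T"
  by (rule hrank_c_eq)

lemma pairs6: "i \<le> j \<Longrightarrow> j < (6::nat) \<Longrightarrow> (i,j) \<in> set [(0,0),(0,1),(0,2),(0,3),(0,4),(0,5),(1,1),(1,2),(1,3),(1,4),(1,5),
   (2,2),(2,3),(2,4),(2,5),(3,3),(3,4),(3,5),(4,4),(4,5),(5,5)]"
  by simp presburger

lemmas evsimps = insert_Diff_if Int_insert_left hrank_c_def qverts_def qedges_def bdl_def bdv_def qv_def sdiff_def vmap_def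

lemma fbeq_k:
  assumes "k < 2"
  shows "\<forall>p\<in>set [(0,0),(0,1),(0,2),(0,3),(0,4),(0,5),(1,1),(1,2),(1,3),(1,4),(1,5),
   (2,2),(2,3),(2,4),(2,5),(3,3),(3,4),(3,5),(4,4),(4,5),(5,5)].
    hrank ends1 k (FB1 ! fst p) (FB1 ! snd p) = hrank ends2 k (FB2 ! fst p) (FB2 ! snd p)"
proof -
  have "k = 0 \<or> k = 1" using assms by arith
  then show ?thesis
    by (elim disjE) (simp_all add: evsimps ends1_def ends2_def FB1_def FB2_def)
qed

lemma fbeq_all:
  assumes "i \<le> j" "j < 6"
  shows "hrank ends1 k (FB1 ! i) (FB1 ! j) = hrank ends2 k (FB2 ! i) (FB2 ! j)"
proof (cases "k < 2")
  case True
  show ?thesis using bspec[OF fbeq_k[OF True] pairs6[OF assms]] by simp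
next
  case False
  then show ?thesis by (simp add: hrank_def)
qed

lemma pdiag_eqI:
  assumes len: "length L1 = length L2"
    and H: "\<And>i j. i \<le> j \<Longrightarrow> j < length L1 \<Longrightarrow> hrank e1 k (L1 ! i) (L1 ! j) = hrank e2 k (L2 ! i) (L2 ! j)"
  shows "pdiag e1 L1 k = pdiag e2 L2 k"
proof -
  have P: "prk e1 L1 k i j = prk e2 L2 k i j" for i j
  proof (cases "0 \<le> i \<and> i \<le> j \<and> j < int (length L1)")
    case True
    then have "nat i \<le> nat j" "nat j < length L1" by auto
    then show ?thesis using True H len by (simp add: prk_def)
  next
    case False
    then have F2: "\<not> (0 \<le> i \<and> i \<le> j \<and> j < int (length L2))" using len by simp
    show ?thesis by (simp only: prk_def if_not_P[OF False] if_not_P[OF F2])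
  qed
  show ?thesis by (rule ext) (simp add: pdiag_def Let_def P len)
qed

fun incs :: "hg_op list \<Rightarrow> nat list" where
  "incs [] = []" | "incs (Inc j # l) = j # incs l" | "incs (Con j # l) = incs l"
fun cons :: "hg_op list \<Rightarrow> nat list" where
  "cons [] = []" | "cons (Inc j # l) = cons l" | "cons (Con j # l) = j # cons l"

lemma incs_set: "{f j |j. Inc j \<in> set l} = f ` set (incs l)"
  by (induction l rule: incs.induct) auto
lemma cons_set: "{f j |j. Con j \<in> set l} = f ` set (cons l)"
  by (induction l rule: cons.induct) auto

lemma hg_space_alt: "hg_space ICf ops p = (sg_Union (ICf ` set (incs (take p ops))), sg_Union (ICf ` set (cons (take p ops))))"
  by (simp add: hg_space_def incs_set cons_set)

definition "hops = [Inc 0, Inc 1, Inc 2, Con 0, Con 2, Con 1]"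

lemma less6: "(p::nat) < 6 \<Longrightarrow> p = 0 \<or> p = 1 \<or> p = 2 \<or> p = 3 \<or> p = 4 \<or> p = 5" by presburger

lemma all6: "(\<forall>p<(6::nat). P p) \<longleftrightarrow> P 0 \<and> P 1 \<and> P 2 \<and> P 3 \<and> P 4 \<and> P 5"
  by (auto dest!: less6)

lemma len_hops: "length hops = 6" by (simp add: hops_def)

lemma valid_hops: "valid_schedule 3 hops"
  unfolding valid_schedule_def len_hops all6 by (simp add: hops_def)

lemma hgs1: "hg_seq (IC V1 E1 ends1 fv1 fe1) hops =
  [(({}, {}), {}, {}), (({1}, {}), {}, {}), (({1,2}, {2}), {}, {}), (({0,1,2}, {0,1,2}), {}, {}),
   (({0,1,2}, {0,1,2}), {1}, {}), (({0,1,2}, {0,1,2}), {0,1}, {0,1}), (({0,1,2}, {0,1,2}), {0,1,2}, {0,1,2})]"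
  by (simp add: hg_seq_def hg_space_alt hops_def upt_rec IC1 IC1[simplified] sg_Union_def) auto

lemma hgs2: "hg_seq (IC V2 E2 ends2 fv2 fe2) hops =
  [(({}, {}), {}, {}), (({1}, {}), {}, {}), (({0,1,2}, {0,1}), {}, {}), (({0,1,2,3}, {0,1,2,3}), {}, {}),
   (({0,1,2,3}, {0,1,2,3}), {1}, {}), (({0,1,2,3}, {0,1,2,3}), {1,2,3}, {2,3}), (({0,1,2,3}, {0,1,2,3}), {0,1,2,3}, {0,1,2,3})]"
  by (simp add: hg_seq_def hg_space_alt hops_def upt_rec IC2 IC2[simplified] sg_Union_def) auto

lemma hgd1: "pdiag ends1 (hg_seq (IC V1 E1 ends1 fv1 fe1) hops) 1 (5,5) = 0"
  unfolding hgs1 by (simp add: pdiag_def prk_def evsimps ends1_def)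

lemma hgd2: "pdiag ends2 (hg_seq (IC V2 E2 ends2 fv2 fe2) hops) 1 (5,5) = 1"
  unfolding hgs2 by (simp add: pdiag_def prk_def evsimps ends2_def)


theorem proposition2:
  shows
  "(\<forall>(V :: 'v set) (E :: 'e set) ends fv fe.
      wf_graph V E ends \<and> filtration V E ends fv fe \<longrightarrow>
      (\<exists>ops. valid_schedule (nlev V E fv fe) ops \<and>
             hg_seq (IC V E ends fv fe) ops = (({}, {}), ({}, {})) # fb_seq V E ends fv fe))
   \<and>
   (\<exists>(V1 :: nat set) (E1 :: nat set) ends1 (V2 :: nat set) (E2 :: nat set) ends2.
      wf_graph V1 E1 ends1 \<and> wf_graph V2 E2 ends2 \<and>
      (\<forall>k. pdiag ends1 (fb_seq V1 E1 ends1 (deg_fv E1 ends1) (deg_fe E1 ends1)) k =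
           pdiag ends2 (fb_seq V2 E2 ends2 (deg_fv E2 ends2) (deg_fe E2 ends2)) k) \<and>
      (\<exists>ops. valid_schedule (nlev V1 E1 (deg_fv E1 ends1) (deg_fe E1 ends1)) ops \<and>
             valid_schedule (nlev V2 E2 (deg_fv E2 ends2) (deg_fe E2 ends2)) ops \<and>
             (\<exists>k. pdiag ends1 (hg_seq (IC V1 E1 ends1 (deg_fv E1 ends1) (deg_fe E1 ends1)) ops) k \<noteq>
                  pdiag ends2 (hg_seq (IC V2 E2 ends2 (deg_fv E2 ends2) (deg_fe E2 ends2)) ops) k)))"
proof (intro conjI)
  show "\<forall>(V :: 'v set) (E :: 'e set) ends fv fe.
      wf_graph V E ends \<and> filtration V E ends fv fe \<longrightarrow>
      (\<exists>ops. valid_schedule (nlev V E fv fe) ops \<and>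
             hg_seq (IC V E ends fv fe) ops = (({}, {}), ({}, {})) # fb_seq V E ends fv fe)"
    using part1 by blast
next
  have wf1: "wf_graph V1 E1 ends1" by (auto simp: wf_graph_def V1_def E1_def ends1_def)
  have wf2: "wf_graph V2 E2 ends2" by (auto simp: wf_graph_def V2_def E2_def ends2_def)
  have fbeq: "\<forall>k. pdiag ends1 (fb_seq V1 E1 ends1 (deg_fv E1 ends1) (deg_fe E1 ends1)) k =
           pdiag ends2 (fb_seq V2 E2 ends2 (deg_fv E2 ends2) (deg_fe E2 ends2)) k"
    unfolding degv1 dege1 degv2 dege2 fb1 fb2
  proof
    fix k
    show "pdiag ends1 FB1 k = pdiag ends2 FB2 k"
    proof (rule pdiag_eqI)
      show "length FB1 = length FB2" by (simp add: FB1_def FB2_def)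
      fix i j assume "i \<le> j" "j < length FB1"
      then show "hrank ends1 k (FB1 ! i) (FB1 ! j) = hrank ends2 k (FB2 ! i) (FB2 ! j)"
        by (intro fbeq_all) (simp_all add: FB1_def)
    qed
  qed
  have ex: "\<exists>ops. valid_schedule (nlev V1 E1 (deg_fv E1 ends1) (deg_fe E1 ends1)) ops \<and>
             valid_schedule (nlev V2 E2 (deg_fv E2 ends2) (deg_fe E2 ends2)) ops \<and>
             (\<exists>k. pdiag ends1 (hg_seq (IC V1 E1 ends1 (deg_fv E1 ends1) (deg_fe E1 ends1)) ops) k \<noteq>
                  pdiag ends2 (hg_seq (IC V2 E2 ends2 (deg_fv E2 ends2) (deg_fe E2 ends2)) ops) k)"
    unfolding degv1 dege1 degv2 dege2 nlev1 nlev2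
  proof (intro exI conjI)
    show "valid_schedule 3 hops" by (rule valid_hops)
    show "valid_schedule 3 hops" by (rule valid_hops)
    show "pdiag ends1 (hg_seq (IC V1 E1 ends1 fv1 fe1) hops) 1 \<noteq> pdiag ends2 (hg_seq (IC V2 E2 ends2 fv2 fe2) hops) 1"
    proof
      assume "pdiag ends1 (hg_seq (IC V1 E1 ends1 fv1 fe1) hops) 1 = pdiag ends2 (hg_seq (IC V2 E2 ends2 fv2 fe2) hops) 1"
      then have "pdiag ends1 (hg_seq (IC V1 E1 ends1 fv1 fe1) hops) 1 (5,5) = pdiag ends2 (hg_seq (IC V2 E2 ends2 fv2 fe2) hops) 1 (5,5)"
        by simp
      then show False using hgd1 hgd2 by simp
    qed
  qed
  show "\<exists>(V1 :: nat set) (E1 :: nat set) ends1 (V2 :: nat set) (E2 :: nat set) ends2.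
      wf_graph V1 E1 ends1 \<and> wf_graph V2 E2 ends2 \<and>
      (\<forall>k. pdiag ends1 (fb_seq V1 E1 ends1 (deg_fv E1 ends1) (deg_fe E1 ends1)) k =
           pdiag ends2 (fb_seq V2 E2 ends2 (deg_fv E2 ends2) (deg_fe E2 ends2)) k) \<and>
      (\<exists>ops. valid_schedule (nlev V1 E1 (deg_fv E1 ends1) (deg_fe E1 ends1)) ops \<and>
             valid_schedule (nlev V2 E2 (deg_fv E2 ends2) (deg_fe E2 ends2)) ops \<and>
             (\<exists>k. pdiag ends1 (hg_seq (IC V1 E1 ends1 (deg_fv E1 ends1) (deg_fe E1 ends1)) ops) k \<noteq>
                  pdiag ends2 (hg_seq (IC V2 E2 ends2 (deg_fv E2 ends2) (deg_fe E2 ends2)) ops) k))"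
    using wf1 wf2 fbeq ex by blast
qed

end
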